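(* Let $\mathbf{L}$ be the $8\times 12$ $(0,1)$-matrix with rows $(1,1,0,1,0,0,0,0,0,0,0,0)$, $(1,1,0,0,1,0,0,0,0,1,0,0)$, $(1,0,1,0,0,1,0,0,0,0,1,0)$, $(1,0,1,0,0,0,1,0,0,0,0,0)$, $(0,1,1,0,0,0,0,1,0,0,0,1)$, $(0,1,1,0,0,0,0,0,1,0,0,0)$, $(1,\dots,1)$, $(0,\dots,0)$, and $\mathbf{R}$ the $8\times12$ $(0,1)$-matrix with rows $(1,1,0,0,1,0,0,\dots,0)$, $(1,1,1,0,0,1,0,\dots,0)$, $(1,1,1,1,0,0,0,\dots,0)$, $(1,0,1,0,1,0,0,\dots,0)$, $(1,1,0,1,0,1,0,\dots,0)$, $(1,0,0,1,0,1,0,\dots,0)$, $(1,\dots,1)$, $(0,\dots,0)$ (in the first six rows, the last six entries are $0$). Then $(\mathbf{L},\mathbf{R})$ is centered and $\mathbf{L}\preceq^{\mathrm{BC}}\mathbf{R}$, but $\mathbf{L}\not\preceq^{\mathrm{PC}}\mathbf{R}$; specifically, for $v=(2,1,1,3,1,3,0,0)$ one has $v\mathbf{L}\not\preceq v\mathbf{R}$.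
   Context: $\mathbf{A}_{(i)}$ is the $i$-th row; $e$ the all-ones row vector; $|v|=\sum_k|v_k|$. A pair of $(0,1)$-matrices with the same number of rows, having a common all-zero row, is centered if $|\mathbf{L}_{(i)}|=|\mathbf{R}_{(i)}|$ for all $i$ and some row satisfies $\mathbf{L}_{(i)}=e=\mathbf{R}_{(i)}$. For $x,y\in\mathbb{R}^d$, $x\preceq y$ means $\sum_{n=1}^k x^\downarrow_n\le\sum_{n=1}^k y^\downarrow_n$ for $k=1,\dots,d-1$ and $\sum_n x_n=\sum_n y_n$, with $x^\downarrow_n$ the $n$-th largest component. $\mathbf{L}\preceq^{\mathrm{BC}}\mathbf{R}$ means $v\mathbf{L}\preceq v\mathbf{R}$ for all $v\in\{0,1\}^8$; $\mathbf{L}\preceq^{\mathrm{PC}}\mathbf{R}$ means $v\mathbf{L}\preceq v\mathbf{R}$ for all $v\in\mathbb{R}_{\ge0}^8$ (row vectors $v$). *)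

theory Defs
  imports Complex_Main
begin

text \<open>Matrices are lists of rows (real lists); row vectors are real lists.\<close>

definition ncols :: "real list list \<Rightarrow> nat" where
  "ncols M = (if M = [] then 0 else length (hd M))"

definition is_matrix :: "nat \<Rightarrow> nat \<Rightarrow> real list list \<Rightarrow> bool" where
  "is_matrix m n M \<longleftrightarrow> length M = m \<and> (\<forall>r\<in>set M. length r = n)"

definition zero_one_matrix :: "real list list \<Rightarrow> bool" where
  "zero_one_matrix M \<longleftrightarrow> (\<forall>r\<in>set M. length r = ncols M) \<and> (\<forall>r\<in>set M. set r \<subseteq> {0, 1})"

definition l1norm :: "real list \<Rightarrow> real" where
  "l1norm v = sum_list (map abs v)"

definition vecmat :: "real list \<Rightarrow> real list list \<Rightarrow> real list" where
  "vecmat v M = map (\<lambda>j. \<Sum>i<length M. v ! i * (M ! i ! j)) [0..<ncols M]"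

definition decr :: "real list \<Rightarrow> real list" where
  "decr x = rev (sort x)"

definition majorized :: "real list \<Rightarrow> real list \<Rightarrow> bool" where
  "majorized x y \<longleftrightarrow> length x = length y \<and>
     (\<forall>k\<in>{1..<length x}. sum_list (take k (decr x)) \<le> sum_list (take k (decr y))) \<and>
     sum_list x = sum_list y"

definition centered :: "real list list \<Rightarrow> real list list \<Rightarrow> bool" where
  "centered L R \<longleftrightarrow> zero_one_matrix L \<and> zero_one_matrix R \<and> length L = length R \<and>
     (\<exists>i<length L. set (L ! i) \<subseteq> {0} \<and> set (R ! i) \<subseteq> {0}) \<and>
     (\<forall>i<length L. l1norm (L ! i) = l1norm (R ! i)) \<and>
     (\<exists>i<length L. L ! i = replicate (ncols L) 1 \<and> R ! i = replicate (ncols R) 1)"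

definition BC_le :: "real list list \<Rightarrow> real list list \<Rightarrow> bool" where
  "BC_le L R \<longleftrightarrow> (\<forall>v. length v = length L \<and> set v \<subseteq> {0, 1} \<longrightarrow> majorized (vecmat v L) (vecmat v R))"

definition PC_le :: "real list list \<Rightarrow> real list list \<Rightarrow> bool" where
  "PC_le L R \<longleftrightarrow> (\<forall>v. length v = length L \<and> (\<forall>x\<in>set v. x \<ge> 0) \<longrightarrow> majorized (vecmat v L) (vecmat v R))"

definition Lmat :: "real list list" where
  "Lmat = [[1,1,0,1,0,0,0,0,0,0,0,0],
           [1,1,0,0,1,0,0,0,0,1,0,0],
           [1,0,1,0,0,1,0,0,0,0,1,0],
           [1,0,1,0,0,0,1,0,0,0,0,0],
           [0,1,1,0,0,0,0,1,0,0,0,1],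
           [0,1,1,0,0,0,0,0,1,0,0,0],
           [1,1,1,1,1,1,1,1,1,1,1,1],
           [0,0,0,0,0,0,0,0,0,0,0,0]]"

definition Rmat :: "real list list" where
  "Rmat = [[1,1,0,0,1,0,0,0,0,0,0,0],
           [1,1,1,0,0,1,0,0,0,0,0,0],
           [1,1,1,1,0,0,0,0,0,0,0,0],
           [1,0,1,0,1,0,0,0,0,0,0,0],
           [1,1,0,1,0,1,0,0,0,0,0,0],
           [1,0,0,1,0,1,0,0,0,0,0,0],
           [1,1,1,1,1,1,1,1,1,1,1,1],
           [0,0,0,0,0,0,0,0,0,0,0,0]]"

end

theory Submission
  imports Defs
begin

lemma enum8: assumes "length v = 8" "set v \<subseteq> {0,1::real}"
  shows "\<exists>a b c d e f g h. v = [a,b,c,d,e,f,g,h] \<and> a\<in>{0,1} \<and> b\<in>{0,1} \<and> c\<in>{0,1} \<and> d\<in>{0,1} \<and> e\<in>{0,1} \<and> f\<in>{0,1} \<and> g\<in>{0,1} \<and> h\<in>{0,1}"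
  using assms
  apply (cases v; simp)
  apply (rename_tac a v1, case_tac v1; simp)
  apply (rename_tac b v2, case_tac v2; simp)
  apply (rename_tac c v3, case_tac v3; simp)
  apply (rename_tac d v4, case_tac v4; simp)
  apply (rename_tac e v5, case_tac v5; simp)
  apply (rename_tac f v6, case_tac v6; simp)
  apply (rename_tac g v7, case_tac v7; simp)
  done

lemma all256: "\<forall>a\<in>{0,1}. \<forall>b\<in>{0,1}. \<forall>c\<in>{0,1}. \<forall>d\<in>{0,1}. \<forall>e\<in>{0,1}. \<forall>f\<in>{0,1}. \<forall>g\<in>{0,1}. \<forall>h\<in>{0,1::real}.
   majorized (vecmat [a,b,c,d,e,f,g,h] Lmat) (vecmat [a,b,c,d,e,f,g,h] Rmat)"
  by (simp add: majorized_def vecmat_def Lmat_def Rmat_def ncols_def decr_def lessThan_nat_numeral set_upt[symmetric] upt_rec)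

lemma BC: "BC_le Lmat Rmat"
  unfolding BC_le_def
proof (intro allI impI)
  fix v :: "real list" assume "length v = length Lmat \<and> set v \<subseteq> {0, 1}"
  then have "length v = 8" "set v \<subseteq> {0,1}" by (auto simp: Lmat_def)
  from enum8[OF this] show "majorized (vecmat v Lmat) (vecmat v Rmat)"
    using all256 by blast
qed

lemma nmaj: "\<not> majorized (vecmat [2,1,1,3,1,3,0,0] Lmat) (vecmat [2,1,1,3,1,3,0,0] Rmat)"
  by (simp add: majorized_def vecmat_def Lmat_def Rmat_def ncols_def decr_def lessThan_nat_numeral set_upt[symmetric] upt_rec)

lemma nPC: "\<not> PC_le Lmat Rmat"
  unfolding PC_le_def using nmaj by (auto simp: Lmat_def intro!: exI[of _ "[2,1,1,3,1,3,0,0]"])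

lemma cent: "centered Lmat Rmat"
  unfolding centered_def zero_one_matrix_def l1norm_def
  apply (intro conjI)
  apply (simp_all add: Lmat_def Rmat_def ncols_def)
  apply (rule exI[of _ 7]; simp)
  apply (simp add: numeral_eq_Suc less_Suc_eq all_conj_distrib)
  apply (rule exI[of _ 6]; simp)
  done

theorem mainTheorem10:
  shows "is_matrix 8 12 Lmat \<and> is_matrix 8 12 Rmat \<and> centered Lmat Rmat \<and> BC_le Lmat Rmat \<and>
         \<not> PC_le Lmat Rmat \<and> \<not> majorized (vecmat [2,1,1,3,1,3,0,0] Lmat) (vecmat [2,1,1,3,1,3,0,0] Rmat)"
  using cent BC nPC nmaj by (simp add: is_matrix_def Lmat_def Rmat_def)

end
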